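(* For $n\ge1$ and $l\in\{1,\dots,n\}$ let $X_{n,l}$ be the depth of the node containing $l$ in the random binary search tree built from a uniformly random permutation of $\{1,\dots,n\}$. Let $(l_n)_{n\in\mathbb{N}}$ be any sequence of integers with $1\le l_n\le n$ for all $n$. Then, as $n\to\infty$, $$\frac{X_{n,l_n}-E X_{n,l_n}}{\sqrt{E X_{n,l_n}}}\ \xrightarrow{\text{distr}}\ Z,\qquad Z\sim N(0,1).$$
   Context: Random binary search tree: given a permutation $(\pi(1),\dots,\pi(n))$ of $\{1,\dots,n\}$, the keys are inserted in order $\pi(1),\pi(2),\dots$; $\pi(1)$ is the root, and each subsequent key moves left if smaller and right if larger than the current node's key, starting at the root, until it reaches an empty position where it is placed. The permutation is uniform over all $n!$ permutations. The depth of a node is its number of edges from the root. $\xrightarrow{\text{distr}}$ denotes convergence in distribution and $N(0,1)$ the standard normal distribution. *)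

theory Defs
  imports "HOL-Probability.Probability" "HOL-Combinatorics.Multiset_Permutations"
begin

datatype bst = Leaf | Node bst nat bst

fun bst_insert :: "nat \<Rightarrow> bst \<Rightarrow> bst" where
  "bst_insert x Leaf = Node Leaf x Leaf"
| "bst_insert x (Node l a r) =
     (if x < a then Node (bst_insert x l) a r
      else if a < x then Node l a (bst_insert x r)
      else Node l a r)"

definition bst_of_list :: "nat list \<Rightarrow> bst" where
  "bst_of_list xs = fold bst_insert xs Leaf"

text \<open>Depth (number of edges from the root) of the node containing key x
  (only meaningful when x occurs in the tree).\<close>
fun bst_depth :: "nat \<Rightarrow> bst \<Rightarrow> nat" where
  "bst_depth x Leaf = 0"
| "bst_depth x (Node l a r) =
     (if x = a then 0 else if x < a then Suc (bst_depth x l) else Suc (bst_depth x r))"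

text \<open>Uniform random permutation of {1..n}, written as the insertion sequence.\<close>
definition rand_perm :: "nat \<Rightarrow> nat list pmf" where
  "rand_perm n = pmf_of_set (permutations_of_set {1..n})"

definition X_depth :: "nat \<Rightarrow> nat list \<Rightarrow> real" where
  "X_depth l \<pi> = real (bst_depth l (bst_of_list \<pi>))"

definition E_depth :: "nat \<Rightarrow> nat \<Rightarrow> real" where
  "E_depth n l = measure_pmf.expectation (rand_perm n) (X_depth l)"

end

theory Submission
  imports Defs "HOL-Real_Asymp.Real_Asymp"
begin


fun recs :: "(nat \<Rightarrow> nat \<Rightarrow> bool) \<Rightarrow> nat set \<Rightarrow> nat list \<Rightarrow> nat" where
  "recs R B [] = 0"
| "recs R B (x # xs) = (if x \<in> B then Suc (recs R {y\<in>B. R x y} xs) else recs R B xs)"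

lemma fold_insert_Node:
  "fold bst_insert xs (Node L x R) =
     Node (fold bst_insert (filter (\<lambda>y. y < x) xs) L) x (fold bst_insert (filter (\<lambda>y. x < y) xs) R)"
  by (induction xs arbitrary: L R) auto

lemma bst_of_list_Cons:
  "bst_of_list (x # xs) = Node (bst_of_list (filter (\<lambda>y. y < x) xs)) x (bst_of_list (filter (\<lambda>y. x < y) xs))"
  by (simp add: bst_of_list_def fold_insert_Node)

lemma recs_filter: "recs R B (filter P xs) = recs R {y\<in>B. P y} xs"
proof (induction xs arbitrary: B)
  case (Cons x xs)
  then show ?case
    by (auto intro!: arg_cong[where f="\<lambda>S. recs R S xs"])
qed simp

lemma recs_empty [simp]: "recs R {} xs = 0"
  by (induction xs) auto

lemma depth_recs:
  "l \<in> set xs \<Longrightarrow> bst_depth l (bst_of_list xs) + 2 = recs (<) {..l} xs + recs (>) {l..} xs"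
proof (induction "length xs" arbitrary: xs rule: less_induct)
  case less
  then obtain x ys where xs: "xs = x # ys" by (cases xs) auto
  show ?case
  proof (cases "x = l")
    case True
    have e1: "{y. y \<le> l \<and> l < y} = {}" and e2: "{y. l \<le> y \<and> y < l} = {}" by auto
    show ?thesis using True by (simp add: xs bst_of_list_Cons e1 e2)
  next
    case False
    note ne = False
    show ?thesis
    proof (cases "x < l")
      case True
      have lin: "l \<in> set (filter (\<lambda>y. x < y) ys)" using less.prems xs True ne by auto
      have "length (filter (\<lambda>y. x < y) ys) < length xs" using xs
        by (simp add: le_imp_less_Suc)
      then have IH: "bst_depth l (bst_of_list (filter (\<lambda>y. x < y) ys)) + 2
        = recs (<) {y\<in>{..l}. x < y} ys + recs (>) {y\<in>{l..}. x < y} ys"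
        using less.hyps[OF _ lin] by (simp add: recs_filter)
      have e: "{y\<in>{l..}. x < y} = {l..}" using True by auto
      show ?thesis using True ne IH e by (simp add: xs bst_of_list_Cons)
    next
      case False
      then have T: "l < x" using ne by simp
      have lin: "l \<in> set (filter (\<lambda>y. y < x) ys)" using less.prems xs T by auto
      have "length (filter (\<lambda>y. y < x) ys) < length xs" using xs
        by (simp add: le_imp_less_Suc)
      then have IH: "bst_depth l (bst_of_list (filter (\<lambda>y. y < x) ys)) + 2
        = recs (<) {y\<in>{..l}. y < x} ys + recs (>) {y\<in>{l..}. y < x} ys"
        using less.hyps[OF _ lin] by (simp add: recs_filter)
      have e: "{y\<in>{..l}. y < x} = {..l}" using T by auto
      show ?thesis using T ne IH e by (simp add: xs bst_of_list_Cons)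
    qed
  qed
qed

lemma sum_perms_Cons:
  assumes "finite A" "A \<noteq> {}"
  shows "(\<Sum>\<pi>\<in>permutations_of_set A. f \<pi>) = (\<Sum>x\<in>A. \<Sum>\<sigma>\<in>permutations_of_set (A - {x}). f (x # \<sigma>))"
proof -
  have "(\<Sum>\<pi>\<in>permutations_of_set A. f \<pi>) = (\<Sum>\<pi>\<in>(\<Union>x\<in>A. (\<lambda>xs. x # xs) ` permutations_of_set (A - {x})). f \<pi>)"
    using permutations_of_set_nonempty[OF assms(2)] by simp
  also have "\<dots> = (\<Sum>x\<in>A. \<Sum>\<pi>\<in>(\<lambda>xs. x # xs) ` permutations_of_set (A - {x}). f \<pi>)"
    by (rule sum.UNION_disjoint) (use assms in auto)
  also have "\<dots> = (\<Sum>x\<in>A. \<Sum>\<sigma>\<in>permutations_of_set (A - {x}). f (x # \<sigma>))"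
    by (rule sum.cong[OF refl]) (subst sum.reindex, auto simp: inj_on_def)
  finally show ?thesis .
qed

locale sorder =
  fixes R :: "nat \<Rightarrow> nat \<Rightarrow> bool"
  assumes irr: "\<And>x. \<not> R x x"
    and tr: "\<And>x y z. R x y \<Longrightarrow> R y z \<Longrightarrow> R x z"
    and tot: "\<And>x y. x \<noteq> y \<Longrightarrow> R x y \<or> R y x"
begin

lemma asym: "R x y \<Longrightarrow> \<not> R y x"
  using irr tr by blast

lemma rank_bij:
  assumes "finite B"
  shows "bij_betw (\<lambda>x. card {y\<in>B. R x y}) B {..<card B}"
proof -
  let ?f = "\<lambda>x. card {y\<in>B. R x y}"
  have lt: "?f x < ?f y" if "x \<in> B" "y \<in> B" "R y x" for x y
  proof -
    have "{z\<in>B. R x z} \<subset> {z\<in>B. R y z}"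
      using that tr irr by blast
    then show ?thesis using assms by (intro psubset_card_mono) auto
  qed
  have inj: "inj_on ?f B"
  proof (rule inj_onI)
    fix x y assume "x \<in> B" "y \<in> B" "?f x = ?f y"
    then show "x = y" using lt tot by (metis less_irrefl)
  qed
  have sub: "?f ` B \<subseteq> {..<card B}"
  proof
    fix k assume "k \<in> ?f ` B"
    then obtain x where x: "x \<in> B" "k = ?f x" by auto
    have "{y\<in>B. R x y} \<subset> B" using x irr by blast
    then show "k \<in> {..<card B}" using x assms by (auto intro: psubset_card_mono)
  qed
  have "card (?f ` B) = card B" using card_image[OF inj] .
  then have "?f ` B = {..<card B}"
    using sub by (intro card_subset_eq) auto
  then show ?thesis using inj unfolding bij_betw_def by simp
qed

lemma sum_rank:
  assumes "finite B"
  shows "(\<Sum>x\<in>B. g (card {y\<in>B. R x y})) = (\<Sum>j<card B. g j)"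
  using sum.reindex_bij_betw[OF rank_bij[OF assms], of g] by simp

lemma sum_recs:
  "finite A \<Longrightarrow> (\<Sum>\<pi>\<in>permutations_of_set A. real (recs R B \<pi>)) = fact (card A) * harm (card (B \<inter> A))"
proof (induction "card A" arbitrary: A B)
  case 0
  then have "A = {}" by simp
  then show ?case by (simp add: harm_def)
next
  case (Suc m)
  have fin: "finite A" and ne: "A \<noteq> {}" using Suc by auto
  let ?b = "card (B \<inter> A)"
  have cA: "card (A - {x}) = m" if "x \<in> A" for x using Suc that fin by simp
  have "(\<Sum>\<pi>\<in>permutations_of_set A. real (recs R B \<pi>))
      = (\<Sum>x\<in>A. \<Sum>\<sigma>\<in>permutations_of_set (A - {x}). real (recs R B (x # \<sigma>)))"
    by (rule sum_perms_Cons[OF fin ne])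
  also have "\<dots> = (\<Sum>x\<in>A \<inter> B. \<Sum>\<sigma>\<in>permutations_of_set (A - {x}). real (recs R B (x # \<sigma>)))
       + (\<Sum>x\<in>A - B. \<Sum>\<sigma>\<in>permutations_of_set (A - {x}). real (recs R B (x # \<sigma>)))"
    using fin by (rule sum.Int_Diff)
  also have "(\<Sum>x\<in>A \<inter> B. \<Sum>\<sigma>\<in>permutations_of_set (A - {x}). real (recs R B (x # \<sigma>)))
      = (\<Sum>x\<in>A \<inter> B. fact m * (1 + harm (card {y\<in>B \<inter> A. R x y})))"
  proof (rule sum.cong[OF refl])
    fix x assume x: "x \<in> A \<inter> B"
    have "(\<Sum>\<sigma>\<in>permutations_of_set (A - {x}). real (recs R B (x # \<sigma>)))
        = (\<Sum>\<sigma>\<in>permutations_of_set (A - {x}). 1 + real (recs R {y\<in>B. R x y} \<sigma>))"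
      using x by simp
    also have "\<dots> = fact m + fact m * harm (card ({y\<in>B. R x y} \<inter> (A - {x})))"
      using Suc.hyps(1)[of "A - {x}" "{y\<in>B. R x y}"] cA[of x] x fin
      by (simp add: sum.distrib)
    also have "{y\<in>B. R x y} \<inter> (A - {x}) = {y\<in>B \<inter> A. R x y}" using irr by blast
    finally show "(\<Sum>\<sigma>\<in>permutations_of_set (A - {x}). real (recs R B (x # \<sigma>)))
        = fact m * (1 + harm (card {y\<in>B \<inter> A. R x y}))" by (simp add: algebra_simps)
  qed
  also have "\<dots> = fact m * (\<Sum>x\<in>B \<inter> A. (1 + harm (card {y\<in>B \<inter> A. R x y})))"
    by (simp add: sum_distrib_left Int_commute)
  also have "(\<Sum>x\<in>B \<inter> A. (1 + harm (card {y\<in>B \<inter> A. R x y}))) = (\<Sum>j<?b. 1 + harm j)"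
    using fin by (intro sum_rank) auto
  also have "(\<Sum>x\<in>A - B. \<Sum>\<sigma>\<in>permutations_of_set (A - {x}). real (recs R B (x # \<sigma>)))
      = (\<Sum>x\<in>A - B. fact m * harm ?b)"
  proof (rule sum.cong[OF refl])
    fix x assume x: "x \<in> A - B"
    have "B \<inter> (A - {x}) = B \<inter> A" using x by blast
    then show "(\<Sum>\<sigma>\<in>permutations_of_set (A - {x}). real (recs R B (x # \<sigma>))) = fact m * harm ?b"
      using Suc.hyps(1)[of "A - {x}" B] cA[of x] x fin by simp
  qed
  also have "(\<Sum>j<?b. 1 + harm j :: real) = ?b * harm ?b"
  proof -
    have "(\<Sum>j<k. harm j :: real) = k * harm k - k" for k
    proof (induction k)
      case (Suc k)
      have "real (Suc k) * inverse (real (Suc k)) = 1" by simp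
      then show ?case using Suc by (simp add: harm_Suc algebra_simps)
    qed (simp add: harm_def)
    then show ?thesis by (simp add: sum.distrib)
  qed
  finally have main: "(\<Sum>\<pi>\<in>permutations_of_set A. real (recs R B \<pi>)) = 
     fact m * (?b * harm ?b) + (\<Sum>x\<in>A - B. fact m * harm ?b)" .
  have "card (A - B) = Suc m - ?b"
    using fin Suc.hyps(2) by (metis card_Diff_subset_Int finite_Int Int_commute)
  then have "real (card (A - B)) = real (Suc m) - real ?b"
    using Suc.hyps(2) card_mono[OF fin, of "B \<inter> A"] by (simp add: of_nat_diff)
  moreover have "(\<Sum>\<pi>\<in>permutations_of_set A. real (recs R B \<pi>)) = fact m * harm ?b * (real (card (A - B)) + real ?b)"
    using main by (simp add: algebra_simps)
  ultimately have "(\<Sum>\<pi>\<in>permutations_of_set A. real (recs R B \<pi>)) = fact m * real (Suc m) * harm ?b"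
    by (simp add: algebra_simps)
  then show ?case unfolding Suc.hyps(2)[symmetric] by (simp add: fact_Suc algebra_simps)
qed

end

interpretation lt: sorder "(<)" by unfold_locales auto
interpretation gt: sorder "(>)" by unfold_locales auto



definition Pz :: "nat \<Rightarrow> complex \<Rightarrow> complex" where
  "Pz m z = (\<Prod>k<m. z + of_nat k)"

lemma Pz_sum: "z * (\<Sum>j<b. Pz j z / fact j) = of_nat b * Pz b z / fact b"
proof (induction b)
  case (Suc b)
  have "z * (\<Sum>j<Suc b. Pz j z / fact j) = of_nat b * Pz b z / fact b + z * Pz b z / fact b"
    using Suc by (simp add: algebra_simps)
  also have "\<dots> = (z + of_nat b) * Pz b z / fact b" by (simp add: field_simps)
  also have "\<dots> = of_nat (Suc b) * Pz (Suc b) z / fact (Suc b)"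
    by (simp add: Pz_def fact_Suc field_simps del: of_nat_Suc)
  finally show ?case .
qed simp

lemma recs_notin: "x \<notin> B \<Longrightarrow> recs R B (x # xs) = recs R B xs" by simp

lemma sum_pgf:
  assumes R1: "sorder R1" and R2: "sorder R2"
  shows "finite A \<Longrightarrow> B \<subseteq> A \<Longrightarrow> C \<subseteq> A \<Longrightarrow> B \<inter> C = {} \<Longrightarrow>
    (\<Sum>\<pi>\<in>permutations_of_set A. z ^ (recs R1 B \<pi> + recs R2 C \<pi>))
      = fact (card A) / (fact (card B) * fact (card C)) * Pz (card B) z * Pz (card C) z"
proof (induction "card A" arbitrary: A B C)
  case 0
  then have "A = {}" by simp
  then show ?case using 0 by (simp add: Pz_def)
next
  case (Suc m)
  have fin: "finite A" using Suc.prems by auto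
  have ne: "A \<noteq> {}" using Suc.hyps(2) by auto
  let ?b = "card B" and ?c = "card C"
  let ?f = "\<lambda>x. \<Sum>\<sigma>\<in>permutations_of_set (A - {x}). z ^ (recs R1 B (x # \<sigma>) + recs R2 C (x # \<sigma>))"
  let ?K = "fact m / (fact ?b * fact ?c) * Pz ?b z * Pz ?c z"
  have cA: "card (A - {x}) = m" if "x \<in> A" for x using Suc.hyps(2) that fin by simp
  have finB: "finite B" and finC: "finite C" using Suc.prems fin by (auto intro: finite_subset)
  have U: "sum g A = sum g B + (sum g C + sum g (A - (B \<union> C)))"
    for g :: "nat \<Rightarrow> complex"
  proof -
    have AU: "A = B \<union> (C \<union> (A - (B \<union> C)))" using Suc.prems by blast
    have "sum g (C \<union> (A - (B \<union> C))) = sum g C + sum g (A - (B \<union> C))"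
      by (rule sum.union_disjoint) (use fin finC in auto)
    moreover have "sum g (B \<union> (C \<union> (A - (B \<union> C)))) = sum g B + sum g (C \<union> (A - (B \<union> C)))"
      by (rule sum.union_disjoint) (use fin finB finC Suc.prems in auto)
    ultimately show ?thesis by (subst AU) simp
  qed
  have "(\<Sum>\<pi>\<in>permutations_of_set A. z ^ (recs R1 B \<pi> + recs R2 C \<pi>)) = (\<Sum>x\<in>A. ?f x)"
    by (rule sum_perms_Cons[OF fin ne])
  also have "(\<Sum>x\<in>A. ?f x) = sum ?f B + (sum ?f C + sum ?f (A - (B \<union> C)))"
    by (rule U)
  finally have S0: "(\<Sum>\<pi>\<in>permutations_of_set A. z ^ (recs R1 B \<pi> + recs R2 C \<pi>)) = 
     sum ?f B + (sum ?f C + sum ?f (A - (B \<union> C)))" .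
  have "sum ?f B = (\<Sum>x\<in>B. z * (fact m / (fact (card {y\<in>B. R1 x y}) * fact ?c)
       * Pz (card {y\<in>B. R1 x y}) z * Pz ?c z))"
  proof (rule sum.cong[OF refl])
    fix x assume x: "x \<in> B"
    then have xA: "x \<in> A" and xC: "x \<notin> C" using Suc.prems by auto
    have IH: "(\<Sum>\<sigma>\<in>permutations_of_set (A - {x}). z ^ (recs R1 {y\<in>B. R1 x y} \<sigma> + recs R2 C \<sigma>))
       = fact m / (fact (card {y\<in>B. R1 x y}) * fact ?c) * Pz (card {y\<in>B. R1 x y}) z * Pz ?c z"
      using Suc.hyps(1)[of "A - {x}" "{y\<in>B. R1 x y}" C] cA[OF xA] fin Suc.prems xC sorder.irr[OF R1]
      by auto
    have "?f x = (\<Sum>\<sigma>\<in>permutations_of_set (A - {x}). z * z ^ (recs R1 {y\<in>B. R1 x y} \<sigma> + recs R2 C \<sigma>))"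
      using x xC by simp
    also have "\<dots> = z * (\<Sum>\<sigma>\<in>permutations_of_set (A - {x}). z ^ (recs R1 {y\<in>B. R1 x y} \<sigma> + recs R2 C \<sigma>))"
      by (simp add: sum_distrib_left)
    also have "\<dots> = z * (fact m / (fact (card {y\<in>B. R1 x y}) * fact ?c) * Pz (card {y\<in>B. R1 x y}) z * Pz ?c z)"
      by (simp only: IH)
    finally show "?f x = z * (fact m / (fact (card {y\<in>B. R1 x y}) * fact ?c)
       * Pz (card {y\<in>B. R1 x y}) z * Pz ?c z)" .
  qed
  also have "\<dots> = (\<Sum>j<?b. z * (fact m / (fact j * fact ?c) * Pz j z * Pz ?c z))"
    by (rule sorder.sum_rank[OF R1 finB])
  also have "\<dots> = fact m * Pz ?c z / fact ?c * (z * (\<Sum>j<?b. Pz j z / fact j))"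
    by (simp add: sum_distrib_left sum_divide_distrib algebra_simps)
  also have "\<dots> = of_nat ?b * ?K" by (simp only: Pz_sum) (simp add: field_simps)
  finally have SB: "sum ?f B = of_nat ?b * ?K" .
  have "sum ?f C = (\<Sum>x\<in>C. z * (fact m / (fact ?b * fact (card {y\<in>C. R2 x y})))
       * Pz ?b z * Pz (card {y\<in>C. R2 x y}) z)"
  proof (rule sum.cong[OF refl])
    fix x assume x: "x \<in> C"
    then have xA: "x \<in> A" and xB: "x \<notin> B" using Suc.prems by auto
    have IH: "(\<Sum>\<sigma>\<in>permutations_of_set (A - {x}). z ^ (recs R1 B \<sigma> + recs R2 {y\<in>C. R2 x y} \<sigma>))
       = fact m / (fact ?b * fact (card {y\<in>C. R2 x y})) * Pz ?b z * Pz (card {y\<in>C. R2 x y}) z"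
      using Suc.hyps(1)[of "A - {x}" B "{y\<in>C. R2 x y}"] cA[OF xA] fin Suc.prems xB sorder.irr[OF R2]
      by auto
    have "?f x = (\<Sum>\<sigma>\<in>permutations_of_set (A - {x}). z * z ^ (recs R1 B \<sigma> + recs R2 {y\<in>C. R2 x y} \<sigma>))"
      using x xB by simp
    also have "\<dots> = z * (\<Sum>\<sigma>\<in>permutations_of_set (A - {x}). z ^ (recs R1 B \<sigma> + recs R2 {y\<in>C. R2 x y} \<sigma>))"
      by (simp add: sum_distrib_left)
    also have "\<dots> = z * (fact m / (fact ?b * fact (card {y\<in>C. R2 x y})) * Pz ?b z * Pz (card {y\<in>C. R2 x y}) z)"
      by (simp only: IH)
    finally show "?f x = z * (fact m / (fact ?b * fact (card {y\<in>C. R2 x y})))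
       * Pz ?b z * Pz (card {y\<in>C. R2 x y}) z" by (simp add: algebra_simps)
  qed
  also have "\<dots> = (\<Sum>j<?c. z * (fact m / (fact ?b * fact j)) * Pz ?b z * Pz j z)"
    by (rule sorder.sum_rank[OF R2 finC])
  also have "\<dots> = fact m * Pz ?b z / fact ?b * (z * (\<Sum>j<?c. Pz j z / fact j))"
    by (simp add: sum_distrib_left sum_divide_distrib algebra_simps)
  also have "\<dots> = of_nat ?c * ?K" by (simp only: Pz_sum) (simp add: field_simps)
  finally have SC: "sum ?f C = of_nat ?c * ?K" .
  have "sum ?f (A - (B \<union> C)) = (\<Sum>x\<in>A - (B \<union> C). ?K)"
  proof (rule sum.cong[OF refl])
    fix x assume x: "x \<in> A - (B \<union> C)"
    then show "?f x = ?K"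
      using Suc.hyps(1)[of "A - {x}" B C] cA[of x] fin Suc.prems by auto
  qed
  also have "\<dots> = of_nat (card (A - (B \<union> C))) * ?K" by simp
  also have "card (A - (B \<union> C)) = Suc m - ?b - ?c"
    using Suc.prems Suc.hyps(2) finB finC
    by (simp add: card_Diff_subset card_Un_disjoint)
  finally have SR: "sum ?f (A - (B \<union> C)) = of_nat (Suc m - ?b - ?c) * ?K" .
  have main: "(\<Sum>\<pi>\<in>permutations_of_set A. z ^ (recs R1 B \<pi> + recs R2 C \<pi>))
     = (of_nat ?b + of_nat ?c + of_nat (Suc m - ?b - ?c)) * ?K" 
    unfolding S0 SB SC SR by (simp only: distrib_right add.assoc)
  have "?b + ?c \<le> Suc m"
    using Suc.prems Suc.hyps(2) finB finC card_mono[OF fin, of "B \<union> C"]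
    by (simp add: card_Un_disjoint)
  then have "(of_nat ?b + of_nat ?c + of_nat (Suc m - ?b - ?c) :: complex) = of_nat (Suc m)"
    by (simp flip: of_nat_add)
  then show ?case using main unfolding Suc.hyps(2)[symmetric]
    by (simp add: fact_Suc field_simps del: of_nat_Suc)
qed



lemma norm_iexp_diff: "norm (iexp x - iexp y) \<le> \<bar>x - y\<bar>"
proof -
  have "iexp x - iexp y = iexp y * (iexp (x - y) - 1)"
    by (simp add: algebra_simps flip: exp_add)
  then have "norm (iexp x - iexp y) = norm (iexp (x - y) - 1)" by (simp add: norm_mult)
  also have "\<dots> \<le> \<bar>x - y\<bar>" using iexp_approx1[of "x - y" 0] by simp
  finally show ?thesis .
qed

lemma sum_inv_sq_le: "(\<Sum>k<m. 1 / (real k + 1)^2) \<le> 2 - 2 / (real m + 1)"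
proof (induction m)
  case (Suc m)
  have e: "2 / (real m + 1) - 2 / (real m + 2) = 2 / ((real m + 1) * (real m + 2))"
    by (simp add: field_simps)
  have "0 \<le> real m * real m" by simp
  then have "1 / (real m + 1)^2 \<le> 2 / ((real m + 1) * (real m + 2))"
    by (simp add: divide_simps power2_eq_square algebra_simps)
  then have "1 / (real m + 1)^2 \<le> 2 / (real m + 1) - 2 / (real m + 2)" using e by simp
  then show ?case using Suc by (simp add: algebra_simps)
qed simp

lemma prod_exp_approx:
  fixes w :: complex
  assumes Re: "Re w \<le> 0" and n1: "norm (1 + w) = 1"
  shows "norm ((\<Prod>k<m. 1 + w / of_nat (Suc k)) - exp (w * harm m)) \<le> 2 * exp (norm w) * norm w ^ 2"
proof -
  have eh: "exp (w * harm m) = (\<Prod>k<m. exp (w / of_nat (Suc k)))"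
    by (simp add: harm_altdef sum_distrib_left exp_sum divide_inverse)
  have n1': "norm (1 + w / of_nat (Suc k)) \<le> 1" for k
  proof -
    define p where "p = inverse (real (Suc k))"
    have p: "0 \<le> p" "p \<le> 1" by (auto simp: p_def inverse_le_1_iff)
    have "of_real (1 - p) + of_real p * (1 + w) = 1 + of_real p * w"
      by (simp add: algebra_simps)
    moreover have "of_real p * w = w / of_nat (Suc k)"
      by (simp add: p_def divide_inverse of_real_inverse mult.commute del: of_nat_Suc)
    ultimately have "1 + w / of_nat (Suc k) = of_real (1 - p) + of_real p * (1 + w)" by simp
    also have "norm \<dots> \<le> (1 - p) + p * 1"
    proof (rule order_trans[OF norm_triangle_ineq])
      have "norm (of_real (1 - p) :: complex) = 1 - p" using p by (simp only: norm_of_real)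
      then show "norm (of_real (1 - p) :: complex) + norm (of_real p * (1 + w)) \<le> (1 - p) + p * 1"
        using p n1 by (simp only: norm_mult norm_of_real)
    qed
    finally show ?thesis by simp
  qed
  have n2: "norm (exp (w / of_nat (Suc k))) \<le> 1" for k
    using Re by (simp add: Re_divide_of_nat divide_nonpos_pos)
  have "norm ((\<Prod>k<m. 1 + w / of_nat (Suc k)) - exp (w * harm m))
      \<le> (\<Sum>k<m. norm (1 + w / of_nat (Suc k) - exp (w / of_nat (Suc k))))"
    unfolding eh by (rule norm_prod_diff) (use n1' n2 in auto)
  also have "\<dots> \<le> (\<Sum>k<m. exp (norm w) * norm w ^ 2 * (1 / (real k + 1)^2))"
  proof (rule sum_mono)
    fix k assume "k \<in> {..<m}"
    let ?u = "w / of_nat (Suc k)"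
    have "norm (exp ?u - (1 + ?u)) \<le> exp (norm ?u) * norm ?u ^ 2"
      using Taylor_exp_field[of ?u 1] by (simp add: power2_eq_square)
    also have "\<dots> \<le> exp (norm w) * (norm w ^ 2 * (1 / (real k + 1)^2))"
    proof -
      have nu: "norm ?u = norm w / (real k + 1)"
        by (simp only: norm_divide norm_of_nat) simp
      have "norm ?u \<le> norm w" unfolding nu
        using mult_left_mono[of 1 "real k + 1" "norm w"] by (simp add: divide_le_eq)
      moreover have "norm ?u ^ 2 = norm w ^ 2 * (1 / (real k + 1)^2)"
        unfolding nu by (simp add: power_divide)
      ultimately show ?thesis by (intro mult_mono) auto
    qed
    finally show "norm (1 + ?u - exp ?u) \<le> exp (norm w) * norm w ^ 2 * (1 / (real k + 1)^2)"
      by (simp add: norm_minus_commute algebra_simps)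
  qed
  also have "\<dots> = exp (norm w) * norm w ^ 2 * (\<Sum>k<m. 1 / (real k + 1)^2)"
    by (simp add: sum_distrib_left)
  also have "\<dots> \<le> exp (norm w) * norm w ^ 2 * 2"
    using sum_inv_sq_le[of m] by (intro mult_left_mono) (auto intro: order_trans)
  finally show ?thesis by simp
qed

lemma exponent_est:
  fixes t \<mu> \<mu>S s :: real
  assumes mu: "\<mu> > 0" and d0: "0 \<le> \<mu>S - \<mu>" and d2: "\<mu>S - \<mu> \<le> 2"
    and s: "s = t / sqrt \<mu>"
  shows "norm (- \<i> * of_real (s * \<mu>) + (iexp s - 1) * of_real \<mu>S - of_real (- (t^2 / 2)))
     \<le> 2 * \<bar>s\<bar> + s^2 + (\<mu> + 2) * \<bar>s\<bar>^3 / 6"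
proof -
  define r where "r = iexp s - (1 + \<i> * of_real s - of_real (s^2 / 2))"
  have "(\<Sum>k\<le>2. (\<i> * of_real s) ^ k / fact k) = 1 + \<i> * of_real s - of_real (s^2 / 2)"
  proof -
    have "(\<i> * of_real s) ^ 2 = - (of_real (s^2) :: complex)"
      by (simp add: power_mult_distrib)
    then show ?thesis by (simp add: numeral_2_eq_2 fact_Suc)
  qed
  then have hr: "norm r \<le> \<bar>s\<bar>^3 / 6"
    using iexp_approx1[of s 2] unfolding r_def by (simp add: numeral_3_eq_3 fact_Suc)
  have s2: "s^2 * \<mu> = t^2" using mu s by (simp add: power_divide)
  define \<delta> where "\<delta> = \<mu>S - \<mu>"
  have dpos: "\<delta> \<ge> 0" using d0 by (simp add: \<delta>_def)
  have eq: "- \<i> * of_real (s * \<mu>) + (iexp s - 1) * of_real \<mu>S - of_real (- ((s^2 * \<mu>) / 2))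
      = \<i> * of_real (s * \<delta>) - of_real (\<delta> * s^2 / 2) + of_real \<mu>S * r"
    unfolding r_def \<delta>_def by (simp add: field_simps)
  have "norm (- \<i> * of_real (s * \<mu>) + (iexp s - 1) * of_real \<mu>S - of_real (- (t^2 / 2)))
     = norm (\<i> * of_real (s * \<delta>) - of_real (\<delta> * s^2 / 2) + of_real \<mu>S * r)"
    using eq s2 by simp
  also have "\<dots> \<le> norm (\<i> * of_real (s * \<delta>)) + norm (of_real (\<delta> * s^2 / 2) :: complex) + norm (of_real \<mu>S * r)"
    by (rule order_trans[OF norm_triangle_ineq], rule add_right_mono, rule norm_triangle_ineq4)
  also have "norm (\<i> * of_real (s * \<delta>)) = \<bar>s\<bar> * \<delta>"
    using dpos by (simp add: norm_mult abs_mult)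
  also have "norm (of_real (\<delta> * s^2 / 2) :: complex) = \<delta> * s^2 / 2"
    using dpos by (simp only: norm_of_real) simp
  also have "norm (of_real \<mu>S * r) = \<mu>S * norm r"
    using d0 mu by (simp add: norm_mult)
  also have "\<bar>s\<bar> * \<delta> + \<delta> * s^2 / 2 + \<mu>S * norm r \<le> \<bar>s\<bar> * 2 + 2 * s^2 / 2 + (\<mu> + 2) * (\<bar>s\<bar>^3 / 6)"
  proof -
    have d2': "\<delta> \<le> 2" using d2 by (simp add: \<delta>_def)
    have "\<bar>s\<bar> * \<delta> \<le> \<bar>s\<bar> * 2" using d2' by (intro mult_left_mono) auto
    moreover have "\<delta> * s^2 / 2 \<le> 2 * s^2 / 2" using d2' by (intro divide_right_mono mult_right_mono) auto
    moreover have "\<mu>S * norm r \<le> (\<mu> + 2) * (\<bar>s\<bar>^3 / 6)"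
      using d2 d0 mu hr by (intro mult_mono) auto
    ultimately show ?thesis by linarith
  qed
  finally show ?thesis by simp
qed

lemma factor_le1:
  fixes w :: complex
  assumes n1: "norm (1 + w) = 1"
  shows "norm (1 + w / of_nat (Suc k)) \<le> 1"
proof -
  define p where "p = inverse (real (Suc k))"
  have p: "0 \<le> p" "p \<le> 1" by (auto simp: p_def inverse_le_1_iff)
  have "of_real (1 - p) + of_real p * (1 + w) = 1 + of_real p * w"
    by (simp add: algebra_simps)
  moreover have "of_real p * w = w / of_nat (Suc k)"
    by (simp add: p_def divide_inverse of_real_inverse mult.commute del: of_nat_Suc)
  ultimately have "1 + w / of_nat (Suc k) = of_real (1 - p) + of_real p * (1 + w)" by simp
  also have "norm \<dots> \<le> (1 - p) + p * 1"
  proof (rule order_trans[OF norm_triangle_ineq])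
    have "norm (of_real (1 - p) :: complex) = 1 - p" using p by (simp only: norm_of_real)
    then show "norm (of_real (1 - p) :: complex) + norm (of_real p * (1 + w)) \<le> (1 - p) + p * 1"
      using p n1 by (simp only: norm_mult norm_of_real)
  qed
  finally show ?thesis by simp
qed

lemma norm_prod_factor_le1:
  fixes w :: complex
  assumes n1: "norm (1 + w) = 1"
  shows "norm (\<Prod>k<m. 1 + w / of_nat (Suc k)) \<le> 1"
proof -
  have "norm (\<Prod>k<m. 1 + w / of_nat (Suc k)) = (\<Prod>k<m. norm (1 + w / of_nat (Suc k)))"
    by (simp add: prod_norm)
  also have "\<dots> \<le> 1" by (rule prod_le_1) (use factor_le1[OF n1] in auto)
  finally show ?thesis .
qed

lemma char_est:
  fixes P :: "'a set" and X :: "'a \<Rightarrow> real" and Sn :: "'a \<Rightarrow> nat" and a b :: nat and t \<mu> s :: real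
  assumes fin: "finite P" and ne: "P \<noteq> {}" and mu: "\<mu> > 0"
    and EX: "(\<Sum>\<pi>\<in>P. X \<pi>) / card P = \<mu>"
    and le: "\<And>\<pi>. \<pi> \<in> P \<Longrightarrow> X \<pi> \<le> real (Sn \<pi>)"
    and ES: "(\<Sum>\<pi>\<in>P. real (Sn \<pi>)) / card P = harm a + harm b"
    and d2: "harm a + harm b - \<mu> \<le> 2"
    and pgf: "\<And>z::complex. (\<Sum>\<pi>\<in>P. z ^ Sn \<pi>) / of_nat (card P)
        = (\<Prod>k<a. 1 + (z - 1) / of_nat (Suc k)) * (\<Prod>k<b. 1 + (z - 1) / of_nat (Suc k))"
    and s: "s = t / sqrt \<mu>"
  shows "norm ((\<Sum>\<pi>\<in>P. iexp (t * ((X \<pi> - \<mu>) / sqrt \<mu>))) / of_nat (card P)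
     - exp (- \<i> * of_real (s * \<mu>) + (iexp s - 1) * of_real (harm a + harm b)))
     \<le> 2 * \<bar>s\<bar> + 4 * exp \<bar>s\<bar> * s^2"
proof -
  define N where "N = real (card P)"
  have Npos: "N > 0" using fin ne by (simp add: N_def card_gt_0_iff)
  define w where "w = iexp s - 1"
  define Qa where "Qa = (\<Prod>k<a. 1 + w / of_nat (Suc k))"
  define Qb where "Qb = (\<Prod>k<b. 1 + w / of_nat (Suc k))"
  have tr: "t * ((X \<pi> - \<mu>) / sqrt \<mu>) = s * X \<pi> - s * \<mu>" for \<pi>
    using s mu by (simp add: field_simps)
  define C where "C = (\<Sum>\<pi>\<in>P. iexp (t * ((X \<pi> - \<mu>) / sqrt \<mu>))) / of_nat (card P)"
  define \<Psi> where "\<Psi> = (\<Sum>\<pi>\<in>P. iexp (s * real (Sn \<pi>) - s * \<mu>)) / of_nat (card P)"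
  have "C - \<Psi> = (\<Sum>\<pi>\<in>P. iexp (s * X \<pi> - s * \<mu>) - iexp (s * real (Sn \<pi>) - s * \<mu>)) / of_nat (card P)"
    unfolding C_def \<Psi>_def tr by (simp add: sum_subtractf diff_divide_distrib)
  then have "norm (C - \<Psi>) \<le> (\<Sum>\<pi>\<in>P. norm (iexp (s * X \<pi> - s * \<mu>) - iexp (s * real (Sn \<pi>) - s * \<mu>))) / N"
    by (simp add: norm_divide N_def norm_sum divide_right_mono)
  also have "\<dots> \<le> (\<Sum>\<pi>\<in>P. \<bar>s\<bar> * (real (Sn \<pi>) - X \<pi>)) / N"
  proof (intro divide_right_mono sum_mono)
    fix \<pi> assume "\<pi> \<in> P"
    then have "X \<pi> \<le> real (Sn \<pi>)" by (rule le)
    then show "norm (iexp (s * X \<pi> - s * \<mu>) - iexp (s * real (Sn \<pi>) - s * \<mu>)) \<le> \<bar>s\<bar> * (real (Sn \<pi>) - X \<pi>)"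
      using norm_iexp_diff[of "s * X \<pi> - s * \<mu>" "s * real (Sn \<pi>) - s * \<mu>"]
      by (simp add: abs_mult flip: right_diff_distrib)
  qed (use Npos in auto)
  also have "\<dots> = \<bar>s\<bar> * ((\<Sum>\<pi>\<in>P. real (Sn \<pi>)) / N - (\<Sum>\<pi>\<in>P. X \<pi>) / N)"
    by (simp add: sum_distrib_left sum_subtractf diff_divide_distrib right_diff_distrib)
  also have "\<dots> = \<bar>s\<bar> * (harm a + harm b - \<mu>)"
    using ES EX by (simp add: N_def)
  also have "\<dots> \<le> \<bar>s\<bar> * 2" using d2 by (intro mult_left_mono) auto
  finally have step1: "norm (C - \<Psi>) \<le> 2 * \<bar>s\<bar>" by simp
  have ie: "iexp (s * real k - s * \<mu>) = iexp (- (s * \<mu>)) * iexp s ^ k" for k :: nat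
  proof -
    have "iexp (s * real k - s * \<mu>) = exp (\<i> * of_real (- (s * \<mu>)) + of_nat k * (\<i> * of_real s))"
      by (simp add: algebra_simps)
    also have "\<dots> = iexp (- (s * \<mu>)) * iexp s ^ k"
      by (simp only: exp_add exp_of_nat_mult)
    finally show ?thesis .
  qed
  have "\<Psi> = iexp (- (s * \<mu>)) * ((\<Sum>\<pi>\<in>P. iexp s ^ Sn \<pi>) / of_nat (card P))"
    unfolding \<Psi>_def ie by (simp add: sum_distrib_left)
  also have "\<dots> = iexp (- (s * \<mu>)) * (Qa * Qb)"
    unfolding Qa_def Qb_def w_def by (simp only: pgf)
  finally have Psi: "\<Psi> = iexp (- (s * \<mu>)) * (Qa * Qb)" .
  have n1: "norm (1 + w) = 1" by (simp add: w_def)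
  have Rew: "Re w \<le> 0" by (simp add: w_def Re_exp)
  have nw: "norm w \<le> \<bar>s\<bar>" using iexp_approx1[of s 0] by (simp add: w_def)
  define ea where "ea = exp (w * harm a)"
  define eb where "eb = exp (w * harm b)"
  have nea: "norm ea \<le> 1" 
  proof -
    have "ea = exp (w * of_real (harm a))" by (simp add: ea_def of_real_harm)
    then show ?thesis using Rew by (simp add: mult_nonpos_nonneg harm_nonneg)
  qed
  have nQb: "norm Qb \<le> 1" unfolding Qb_def by (rule norm_prod_factor_le1[OF n1])
  have E1: "norm (Qa - ea) \<le> 2 * exp (norm w) * norm w ^ 2"
    unfolding Qa_def ea_def by (rule prod_exp_approx[OF Rew n1])
  have E2: "norm (Qb - eb) \<le> 2 * exp (norm w) * norm w ^ 2"
    unfolding Qb_def eb_def by (rule prod_exp_approx[OF Rew n1])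
  have "Qa * Qb - ea * eb = (Qa - ea) * Qb + ea * (Qb - eb)" by (simp add: algebra_simps)
  then have "norm (Qa * Qb - ea * eb) \<le> norm (Qa - ea) * norm Qb + norm ea * norm (Qb - eb)"
    by (metis norm_mult norm_triangle_ineq)
  also have "\<dots> \<le> norm (Qa - ea) * 1 + 1 * norm (Qb - eb)"
    using nQb nea by (intro add_mono mult_mono) auto
  also have "\<dots> \<le> 4 * exp (norm w) * norm w ^ 2" using E1 E2 by simp
  also have "\<dots> \<le> 4 * exp \<bar>s\<bar> * s^2"
  proof -
    have "norm w ^ 2 \<le> s^2" using nw by (metis abs_ge_zero norm_ge_zero power2_abs power_mono)
    moreover have "exp (norm w) \<le> exp \<bar>s\<bar>" using nw by simp
    ultimately show ?thesis by (intro mult_mono mult_left_mono) auto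
  qed
  finally have step2: "norm (Qa * Qb - ea * eb) \<le> 4 * exp \<bar>s\<bar> * s^2" .
  have G: "exp (- \<i> * of_real (s * \<mu>) + (iexp s - 1) * of_real (harm a + harm b)) = iexp (- (s * \<mu>)) * (ea * eb)"
    unfolding ea_def eb_def w_def by (simp add: of_real_harm algebra_simps flip: exp_add)
  have "norm (\<Psi> - iexp (- (s * \<mu>)) * (ea * eb)) = norm (Qa * Qb - ea * eb)"
    unfolding Psi by (simp add: norm_mult flip: right_diff_distrib)
  then have step2': "norm (\<Psi> - iexp (- (s * \<mu>)) * (ea * eb)) \<le> 4 * exp \<bar>s\<bar> * s^2"
    using step2 by simp
  have "norm (C - iexp (- (s * \<mu>)) * (ea * eb)) \<le> 2 * \<bar>s\<bar> + 4 * exp \<bar>s\<bar> * s^2"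
    by (rule norm_diff_triangle_le[OF step1 step2'])
  then show ?thesis unfolding G C_def .
qed



lemma recs_inter: "recs R B xs = recs R (B \<inter> set xs) xs"
proof (induction xs arbitrary: B)
  case Nil then show ?case by simp
next
  case (Cons x xs)
  show ?case
  proof (cases "x \<in> B")
    case True
    have xin: "x \<in> B \<inter> set (x # xs)" using True by simp
    have e1: "recs R B (x # xs) = Suc (recs R {y\<in>B. R x y} xs)" using True by simp
    have e2: "recs R (B \<inter> set (x # xs)) (x # xs) = Suc (recs R {y\<in>B \<inter> set (x # xs). R x y} xs)"
      using xin by (simp only: recs.simps if_True)
    have "recs R {y\<in>B. R x y} xs = recs R ({y\<in>B. R x y} \<inter> set xs) xs" by (rule Cons.IH)
    moreover have "recs R {y\<in>B \<inter> set (x # xs). R x y} xs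
       = recs R ({y\<in>B \<inter> set (x # xs). R x y} \<inter> set xs) xs" by (rule Cons.IH)
    moreover have "{y\<in>B. R x y} \<inter> set xs = {y\<in>B \<inter> set (x # xs). R x y} \<inter> set xs" by auto
    ultimately show ?thesis unfolding e1 e2 by simp
  next
    case False
    have xin: "x \<notin> B \<inter> set (x # xs)" using False by simp
    have e1: "recs R B (x # xs) = recs R B xs" using False by simp
    have e2: "recs R (B \<inter> set (x # xs)) (x # xs) = recs R (B \<inter> set (x # xs)) xs"
      using xin by (simp only: recs.simps if_False)
    have "recs R B xs = recs R (B \<inter> set xs) xs" by (rule Cons.IH)
    moreover have "recs R (B \<inter> set (x # xs)) xs = recs R (B \<inter> set (x # xs) \<inter> set xs) xs" by (rule Cons.IH)
    moreover have "B \<inter> set xs = B \<inter> set (x # xs) \<inter> set xs" by auto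
    ultimately show ?thesis unfolding e1 e2 by simp
  qed
qed

lemma recs_insert_le:
  assumes R: "sorder R"
  shows "(\<forall>b\<in>B. R b m) \<Longrightarrow> recs R (insert m B) xs \<le> Suc (recs R B xs)"
proof (induction xs arbitrary: B)
  case Nil then show ?case by simp
next
  case (Cons x xs)
  show ?case
  proof (cases "x = m")
    case True
    have E: "{y \<in> insert m B. R m y} = {}"
      using Cons.prems sorder.irr[OF R] sorder.asym[OF R] by blast
    have "recs R (insert m B) (x # xs) = Suc (recs R {y \<in> insert m B. R m y} xs)"
      using True by (simp only: recs.simps insertI1 if_True)
    then have "recs R (insert m B) (x # xs) = 1" unfolding E by simp
    then show ?thesis by simp
  next
    case ne: False
    show ?thesis
    proof (cases "x \<in> B")
      case True
      have Rxm: "R x m" using Cons.prems True by blast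
      have eq: "{y \<in> insert m B. R x y} = insert m {y\<in>B. R x y}" using Rxm by auto
      have "\<forall>b\<in>{y\<in>B. R x y}. R b m" using Cons.prems by blast
      then have "recs R (insert m {y\<in>B. R x y}) xs \<le> Suc (recs R {y\<in>B. R x y} xs)" by (rule Cons.IH)
      then show ?thesis using True ne eq by simp
    next
      case False
      then show ?thesis using ne Cons.IH[OF Cons.prems] by simp
    qed
  qed
qed

lemma Pz_div_fact: "Pz m z / fact m = (\<Prod>k<m. 1 + (z - 1) / of_nat (Suc k))"
proof (induction m)
  case 0 then show ?case by (simp add: Pz_def)
next
  case (Suc m)
  have "Pz (Suc m) z / fact (Suc m) = (Pz m z / fact m) * ((z + of_nat m) / of_nat (Suc m))"
    by (simp add: Pz_def fact_Suc del: of_nat_Suc)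
  also have "(z + of_nat m) / of_nat (Suc m) = 1 + (z - 1) / of_nat (Suc m)"
  proof -
    have nz: "(of_nat (Suc m) :: complex) \<noteq> 0" by (simp only: of_nat_eq_0_iff)
    have eq: "(z + of_nat m) = of_nat (Suc m) + (z - 1)" by simp
    have "(z + of_nat m) / of_nat (Suc m) = (of_nat (Suc m) + (z - 1)) / of_nat (Suc m)"
      by (simp only: eq)
    also have "\<dots> = of_nat (Suc m) / of_nat (Suc m) + (z - 1) / of_nat (Suc m)"
      by (rule add_divide_distrib)
    also have "\<dots> = 1 + (z - 1) / of_nat (Suc m)"
      by (simp only: divide_self[OF nz])
    finally show ?thesis .
  qed
  finally show ?case using Suc by simp
qed

lemma char_rand_perm:
  "char (distr (measure_pmf (rand_perm n)) borel f) t
     = (\<Sum>\<pi>\<in>permutations_of_set {1..n}. iexp (t * f \<pi>)) / of_nat (card (permutations_of_set {1..n}))"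
proof -
  have m: "(\<lambda>x. iexp (t * x)) \<in> borel_measurable borel"
    by (intro borel_measurable_continuous_onI continuous_intros)
  have "char (distr (measure_pmf (rand_perm n)) borel f) t = integral\<^sup>L (measure_pmf (rand_perm n)) (\<lambda>\<pi>. iexp (t * f \<pi>))"
    unfolding char_def by (subst integral_distr) (use m in auto)
  also have "\<dots> = (\<Sum>\<pi>\<in>permutations_of_set {1..n}. iexp (t * f \<pi>)) / of_nat (card (permutations_of_set {1..n}))"
  proof -
    let ?P = "permutations_of_set {1..n::nat}"
    have fin: "finite ?P" and ne: "?P \<noteq> {}" by auto
    have "integral\<^sup>L (measure_pmf (pmf_of_set ?P)) (\<lambda>\<pi>. iexp (t * f \<pi>))
        = (\<Sum>\<pi>\<in>?P. pmf (pmf_of_set ?P) \<pi> *\<^sub>R iexp (t * f \<pi>))"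
      by (rule integral_measure_pmf[OF fin]) (use fin ne in auto)
    also have "\<dots> = (\<Sum>\<pi>\<in>?P. iexp (t * f \<pi>) / of_nat (card ?P))"
      using fin ne by (intro sum.cong refl) (simp add: scaleR_conv_of_real divide_inverse mult.commute of_real_inverse)
    also have "\<dots> = (\<Sum>\<pi>\<in>?P. iexp (t * f \<pi>)) / of_nat (card ?P)"
      by (simp add: sum_divide_distrib)
    finally show ?thesis unfolding rand_perm_def .
  qed
  finally show ?thesis .
qed

lemma real_distr_rand_perm: "real_distribution (distr (measure_pmf (rand_perm n)) borel f)"
  unfolding real_distribution_def real_distribution_axioms_def
  by (auto intro!: measure_pmf.prob_space_distr)

lemma sorder_lt: "sorder ((<) :: nat \<Rightarrow> nat \<Rightarrow> bool)" by unfold_locales auto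
lemma sorder_gt: "sorder ((>) :: nat \<Rightarrow> nat \<Rightarrow> bool)" by unfold_locales auto

lemma per_n:
  fixes L n :: nat and t :: real
  assumes L1: "1 \<le> L" and Ln: "L \<le> n"
  defines "\<mu> \<equiv> E_depth n L"
  shows "0 \<le> harm (L - 1) + harm (n - L) - \<mu>"
    and "harm (L - 1) + harm (n - L) - \<mu> \<le> 2"
    and "ln (real n) - 2 \<le> \<mu>"
    and "\<mu> > 0 \<Longrightarrow> norm (char (distr (measure_pmf (rand_perm n)) borel (\<lambda>\<pi>. (X_depth L \<pi> - \<mu>) / sqrt \<mu>)) t
          - exp (- \<i> * of_real (t / sqrt \<mu> * \<mu>) + (iexp (t / sqrt \<mu>) - 1) * of_real (harm (L - 1) + harm (n - L))))
        \<le> 2 * \<bar>t / sqrt \<mu>\<bar> + 4 * exp \<bar>t / sqrt \<mu>\<bar> * (t / sqrt \<mu>)^2"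
proof -
  define P where "P = permutations_of_set {1..n}"
  have finP: "finite P" and neP: "P \<noteq> {}" by (auto simp: P_def)
  have cardP: "card P = fact n" by (simp add: P_def)
  have setp: "set \<pi> = {1..n}" if "\<pi> \<in> P" for \<pi> using that by (auto simp: P_def permutations_of_setD)
  define r1 where "r1 \<pi> = recs (<) {..L} \<pi>" for \<pi>
  define r2 where "r2 \<pi> = recs (>) {L..} \<pi>" for \<pi>
  have Xeq: "X_depth L \<pi> = real (r1 \<pi>) + real (r2 \<pi>) - 2" if "\<pi> \<in> P" for \<pi>
  proof -
    have "L \<in> set \<pi>" using setp[OF that] L1 Ln by auto
    from depth_recs[OF this] show ?thesis unfolding X_depth_def r1_def r2_def by linarith
  qed
  have c1: "{..L} \<inter> {1..n} = {1..L}" using Ln by auto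
  have c2: "{L..} \<inter> {1..n} = {L..n}" using L1 by auto
  have S1: "(\<Sum>\<pi>\<in>P. real (r1 \<pi>)) = fact n * harm L"
    using lt.sum_recs[OF finite_atLeastAtMost[of 1 n], of "{..L}"] unfolding c1 r1_def P_def by simp
  have S2: "(\<Sum>\<pi>\<in>P. real (r2 \<pi>)) = fact n * harm (n + 1 - L)"
    using gt.sum_recs[OF finite_atLeastAtMost[of 1 n], of "{L..}"] unfolding c2 r2_def P_def by simp
  have EX: "(\<Sum>\<pi>\<in>P. X_depth L \<pi>) / card P = \<mu>"
    unfolding \<mu>_def E_depth_def rand_perm_def P_def[symmetric]
    by (simp add: integral_pmf_of_set[OF neP finP])
  have "(\<Sum>\<pi>\<in>P. X_depth L \<pi>) = (\<Sum>\<pi>\<in>P. real (r1 \<pi>) + real (r2 \<pi>) - 2)"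
    by (rule sum.cong[OF refl]) (rule Xeq)
  also have "\<dots> = fact n * harm L + fact n * harm (n + 1 - L) - 2 * fact n"
    by (simp add: sum_subtractf sum.distrib S1 S2 cardP)
  finally have SX: "(\<Sum>\<pi>\<in>P. X_depth L \<pi>) = fact n * (harm L + harm (n + 1 - L) - 2)"
    by (simp add: algebra_simps)
  have mu_eq: "\<mu> = harm L + harm (n + 1 - L) - 2"
    using EX unfolding SX cardP by simp
  have hL: "harm L = harm (L - 1) + inverse (real L)"
    using L1 harm_Suc[of "L - 1"] by simp
  have hR: "harm (n + 1 - L) = harm (n - L) + inverse (real (n + 1 - L))"
    using Ln harm_Suc[of "n - L"] by (simp add: Suc_diff_le)
  have i1: "0 < inverse (real L)" "inverse (real L) \<le> 1" using L1 by (auto simp: inverse_le_1_iff)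
  have i2: "0 < inverse (real (n + 1 - L))" "inverse (real (n + 1 - L)) \<le> 1" using Ln
    by (auto simp: inverse_le_1_iff)
  have delta: "harm (L - 1) + harm (n - L) - \<mu> = 2 - inverse (real L) - inverse (real (n + 1 - L))"
    unfolding mu_eq hL hR by simp
  show d0: "0 \<le> harm (L - 1) + harm (n - L) - \<mu>" using delta i1 i2 by linarith
  show d2: "harm (L - 1) + harm (n - L) - \<mu> \<le> 2" using delta i1 i2 by linarith
  show "ln (real n) - 2 \<le> \<mu>"
  proof -
    have "ln (real L + 1) \<le> harm L" by (rule ln_le_harm)
    moreover have "ln (real (n + 1 - L) + 1) \<le> harm (n + 1 - L)" by (rule ln_le_harm)
    moreover have "ln (real n) \<le> ln (real L + 1) + ln (real (n + 1 - L) + 1)"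
    proof -
      have pos: "real L + 1 > 0" "real (n + 1 - L) + 1 > 0" by auto
      have "real n \<le> (real L + 1) * (real (n + 1 - L) + 1)"
      proof -
        have "real (n + 1 - L) = real n + 1 - real L" using Ln by (simp add: of_nat_diff)
        moreover have "real L \<le> real n" using Ln by simp
        moreover have "1 \<le> real L" using L1 by simp
        ultimately have e: "real (n + 1 - L) = real n + 1 - real L" and ln': "real L \<le> real n"
          and l1: "1 \<le> real L" by auto
        have nn: "0 \<le> real L * (real n - real L)" using ln' by simp
        have "(real L + 1) * (real (n + 1 - L) + 1) = real n + real L * (real n - real L) + real L + 2"
          unfolding e by (simp add: algebra_simps)
        then show ?thesis using nn l1 by linarith
      qed
      then have "ln (real n) \<le> ln ((real L + 1) * (real (n + 1 - L) + 1))"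
        using L1 Ln by (intro ln_mono) auto
      also have "\<dots> = ln (real L + 1) + ln (real (n + 1 - L) + 1)" using pos by (simp add: ln_mult)
      finally show ?thesis .
    qed
    ultimately show ?thesis unfolding mu_eq by linarith
  qed
  define Sn where "Sn \<pi> = recs (<) {1..<L} \<pi> + recs (>) {L<..n} \<pi>" for \<pi>
  have le: "X_depth L \<pi> \<le> real (Sn \<pi>)" if "\<pi> \<in> P" for \<pi>
  proof -
    have a: "r1 \<pi> \<le> Suc (recs (<) {1..<L} \<pi>)"
    proof -
      have "r1 \<pi> = recs (<) ({..L} \<inter> set \<pi>) \<pi>" unfolding r1_def by (rule recs_inter)
      moreover have "{..L} \<inter> set \<pi> = insert L {1..<L}" using setp[OF that] L1 Ln by auto
      ultimately have "r1 \<pi> = recs (<) (insert L {1..<L}) \<pi>" by simp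
      then show ?thesis using recs_insert_le[OF sorder_lt, of "{1..<L}" L \<pi>] by simp
    qed
    have b: "r2 \<pi> \<le> Suc (recs (>) {L<..n} \<pi>)"
    proof -
      have "r2 \<pi> = recs (>) ({L..} \<inter> set \<pi>) \<pi>" unfolding r2_def by (rule recs_inter)
      moreover have "{L..} \<inter> set \<pi> = insert L {L<..n}" using setp[OF that] L1 Ln by auto
      ultimately have "r2 \<pi> = recs (>) (insert L {L<..n}) \<pi>" by simp
      then show ?thesis using recs_insert_le[OF sorder_gt, of "{L<..n}" L \<pi>] by simp
    qed
    show ?thesis using a b Xeq[OF that] unfolding Sn_def by simp
  qed
  have ES: "(\<Sum>\<pi>\<in>P. real (Sn \<pi>)) / card P = harm (L - 1) + harm (n - L)"
  proof -
    have e1: "{1..<L} \<inter> {1..n} = {1..<L}" and e2: "{L<..n} \<inter> {1..n} = {L<..n}" using Ln by auto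
    have "(\<Sum>\<pi>\<in>P. real (Sn \<pi>)) = (\<Sum>\<pi>\<in>P. real (recs (<) {1..<L} \<pi>)) + (\<Sum>\<pi>\<in>P. real (recs (>) {L<..n} \<pi>))"
      by (simp add: Sn_def sum.distrib)
    also have "\<dots> = fact n * harm (L - 1) + fact n * harm (n - L)"
      using lt.sum_recs[OF finite_atLeastAtMost[of 1 n], of "{1..<L}"]
        gt.sum_recs[OF finite_atLeastAtMost[of 1 n], of "{L<..n}"]
      unfolding e1 e2 P_def by simp
    finally have "(\<Sum>\<pi>\<in>P. real (Sn \<pi>)) = fact n * (harm (L - 1) + harm (n - L))"
      by (simp only: distrib_left)
    then show ?thesis unfolding cardP by simp
  qed
  have pgf: "(\<Sum>\<pi>\<in>P. z ^ Sn \<pi>) / of_nat (card P)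
        = (\<Prod>k<L - 1. 1 + (z - 1) / of_nat (Suc k)) * (\<Prod>k<n - L. 1 + (z - 1) / of_nat (Suc k))"
    for z :: complex
  proof -
    have sub1: "{1..<L} \<subseteq> {1..n}" using Ln by auto
    have sub2: "{L<..n} \<subseteq> {1..n}" using L1 by auto
    have disj: "{1..<L} \<inter> {L<..n} = {}" by auto
    have "(\<Sum>\<pi>\<in>P. z ^ Sn \<pi>) = fact n / (fact (L - 1) * fact (n - L)) * Pz (L - 1) z * Pz (n - L) z"
      using sum_pgf[OF sorder_lt sorder_gt finite_atLeastAtMost sub1 sub2 disj, of z]
      unfolding P_def Sn_def by simp
    then have "(\<Sum>\<pi>\<in>P. z ^ Sn \<pi>) / of_nat (card P) = (Pz (L - 1) z / fact (L - 1)) * (Pz (n - L) z / fact (n - L))"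
      unfolding cardP by (simp add: divide_simps)
    then show ?thesis by (simp only: Pz_div_fact)
  qed
  show "\<mu> > 0 \<Longrightarrow> norm (char (distr (measure_pmf (rand_perm n)) borel (\<lambda>\<pi>. (X_depth L \<pi> - \<mu>) / sqrt \<mu>)) t
          - exp (- \<i> * of_real (t / sqrt \<mu> * \<mu>) + (iexp (t / sqrt \<mu>) - 1) * of_real (harm (L - 1) + harm (n - L))))
        \<le> 2 * \<bar>t / sqrt \<mu>\<bar> + 4 * exp \<bar>t / sqrt \<mu>\<bar> * (t / sqrt \<mu>)^2"
  proof -
    assume mpos: "\<mu> > 0"
    have "norm ((\<Sum>\<pi>\<in>P. iexp (t * ((X_depth L \<pi> - \<mu>) / sqrt \<mu>))) / of_nat (card P)
     - exp (- \<i> * of_real (t / sqrt \<mu> * \<mu>) + (iexp (t / sqrt \<mu>) - 1) * of_real (harm (L - 1) + harm (n - L))))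
     \<le> 2 * \<bar>t / sqrt \<mu>\<bar> + 4 * exp \<bar>t / sqrt \<mu>\<bar> * (t / sqrt \<mu>)^2"
      by (rule char_est[OF finP neP mpos EX le ES d2 pgf refl])
    then show ?thesis unfolding char_rand_perm P_def .
  qed
qed

theorem mainTheorem4:
  fixes l :: "nat \<Rightarrow> nat"
  assumes "\<And>n. n \<ge> 1 \<Longrightarrow> 1 \<le> l n \<and> l n \<le> n"
  shows "weak_conv_m
           (\<lambda>n. distr (measure_pmf (rand_perm n)) borel
                   (\<lambda>\<pi>. (X_depth (l n) \<pi> - E_depth n (l n)) / sqrt (E_depth n (l n))))
           std_normal_distribution"
proof (rule levy_continuity)
  fix n show "real_distribution (distr (measure_pmf (rand_perm n)) borel
                   (\<lambda>\<pi>. (X_depth (l n) \<pi> - E_depth n (l n)) / sqrt (E_depth n (l n))))"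
    by (rule real_distr_rand_perm)
next
  show "real_distribution std_normal_distribution" by (rule real_dist_normal_dist)
next
  fix t :: real
  define \<mu> where "\<mu> n = E_depth n (l n)" for n
  define \<mu>S :: "nat \<Rightarrow> real" where "\<mu>S n = harm (l n - 1) + harm (n - l n)" for n
  define s where "s n = t / sqrt (\<mu> n)" for n
  define e where "e n = - \<i> * of_real (s n * \<mu> n) + (iexp (s n) - 1) * of_real (\<mu>S n)" for n
  define C where "C n = char (distr (measure_pmf (rand_perm n)) borel
                   (\<lambda>\<pi>. (X_depth (l n) \<pi> - E_depth n (l n)) / sqrt (E_depth n (l n)))) t" for n
  define h where "h x = 2 * (\<bar>t\<bar> / sqrt x) + 4 * exp (\<bar>t\<bar> / sqrt x) * (t^2 / x)" for x :: real
  define g where "g x = 2 * (\<bar>t\<bar> / sqrt x) + t^2 / x + (x + 2) * \<bar>t\<bar>^3 / (6 * (x * sqrt x))" for x :: real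
  have hlim: "(h \<longlongrightarrow> 0) at_top" unfolding h_def by real_asymp
  have glim: "(g \<longlongrightarrow> 0) at_top" unfolding g_def by real_asymp
  have lnlim: "filterlim (\<lambda>n::nat. ln (real n) - 2) at_top sequentially" by real_asymp
  have lb: "ln (real n) - 2 \<le> \<mu> n" if "1 \<le> n" for n
    using per_n(3)[of "l n" n] assms[OF that] unfolding \<mu>_def by blast
  have lim_mu: "filterlim \<mu> at_top sequentially"
  proof (rule filterlim_at_top_mono[OF lnlim])
    show "eventually (\<lambda>n. ln (real n) - 2 \<le> \<mu> n) sequentially"
      using eventually_ge_at_top[of 1] by eventually_elim (rule lb)
  qed
  have evpos: "eventually (\<lambda>n. \<mu> n > 0) sequentially"
    using lim_mu by (simp add: filterlim_at_top_dense)
  have ev: "eventually (\<lambda>n. 1 \<le> n \<and> \<mu> n > 0) sequentially"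
    using evpos eventually_ge_at_top[of 1] by eventually_elim auto
  have sabs: "\<bar>s n\<bar> = \<bar>t\<bar> / sqrt (\<mu> n)" and ssq: "(s n)^2 = t^2 / \<mu> n"
    and scube: "\<bar>s n\<bar>^3 = \<bar>t\<bar>^3 / (\<mu> n * sqrt (\<mu> n))" if "\<mu> n > 0" for n
  proof -
    show "\<bar>s n\<bar> = \<bar>t\<bar> / sqrt (\<mu> n)" using that by (simp add: s_def abs_divide)
    show "(s n)^2 = t^2 / \<mu> n" using that by (simp add: s_def power_divide)
    have "sqrt (\<mu> n) ^ 3 = \<mu> n * sqrt (\<mu> n)" using that
      by (simp add: power3_eq_cube)
    then show "\<bar>s n\<bar>^3 = \<bar>t\<bar>^3 / (\<mu> n * sqrt (\<mu> n))"
      using that by (simp add: s_def abs_divide power_divide power_abs)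
  qed
  have b1: "eventually (\<lambda>n. norm (C n - exp (e n)) \<le> h (\<mu> n)) sequentially"
    using ev
  proof eventually_elim
    case (elim n)
    then have L: "1 \<le> l n" "l n \<le> n" using assms by auto
    have "norm (C n - exp (e n)) \<le> 2 * \<bar>s n\<bar> + 4 * exp \<bar>s n\<bar> * (s n)^2"
      using per_n(4)[OF L, of t] elim unfolding C_def e_def s_def \<mu>_def \<mu>S_def by simp
    also have "\<dots> = h (\<mu> n)" using elim unfolding h_def sabs[OF conjunct2[OF elim]] ssq[OF conjunct2[OF elim]] by simp
    finally show ?case .
  qed
  have b2: "eventually (\<lambda>n. norm (e n - of_real (- (t^2 / 2))) \<le> g (\<mu> n)) sequentially"
    using ev
  proof eventually_elim
    case (elim n)
    then have L: "1 \<le> l n" "l n \<le> n" using assms by auto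
    have "norm (e n - of_real (- (t^2 / 2))) \<le> 2 * \<bar>s n\<bar> + (s n)^2 + (\<mu> n + 2) * \<bar>s n\<bar>^3 / 6"
      unfolding e_def
      by (rule exponent_est) (use elim per_n(1,2)[OF L] in \<open>auto simp: \<mu>_def \<mu>S_def s_def\<close>)
    also have "\<dots> = g (\<mu> n)"
      using elim unfolding g_def scube[OF conjunct2[OF elim]] unfolding sabs[OF conjunct2[OF elim]] ssq[OF conjunct2[OF elim]]
      by (simp add: field_simps)
    finally show ?case .
  qed
  have "((\<lambda>n. h (\<mu> n)) \<longlongrightarrow> 0) sequentially" by (rule filterlim_compose[OF hlim lim_mu])
  then have l1: "((\<lambda>n. C n - exp (e n)) \<longlongrightarrow> 0) sequentially"
    by (rule Lim_null_comparison[OF b1])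
  have "((\<lambda>n. g (\<mu> n)) \<longlongrightarrow> 0) sequentially" by (rule filterlim_compose[OF glim lim_mu])
  then have "((\<lambda>n. e n - of_real (- (t^2 / 2))) \<longlongrightarrow> 0) sequentially"
    by (rule Lim_null_comparison[OF b2])
  then have "(e \<longlongrightarrow> of_real (- (t^2 / 2))) sequentially" by (rule LIM_zero_cancel)
  then have l2: "((\<lambda>n. exp (e n)) \<longlongrightarrow> exp (of_real (- (t^2 / 2)))) sequentially"
    by (rule tendsto_exp)
  have "((\<lambda>n. (C n - exp (e n)) + exp (e n)) \<longlongrightarrow> 0 + exp (of_real (- (t^2 / 2)))) sequentially"
    by (rule tendsto_add[OF l1 l2])
  then have "(C \<longlongrightarrow> exp (of_real (- (t^2 / 2)))) sequentially" by simp
  moreover have "char std_normal_distribution t = exp (of_real (- (t^2 / 2)))"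
    by (simp only: char_std_normal_distribution exp_of_real minus_divide_left)
  ultimately show "(\<lambda>n. char (distr (measure_pmf (rand_perm n)) borel
                   (\<lambda>\<pi>. (X_depth (l n) \<pi> - E_depth n (l n)) / sqrt (E_depth n (l n)))) t)
      \<longlonglongrightarrow> char std_normal_distribution t"
    unfolding C_def by simp
qed


end
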